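(* Let $T_1,T_2$ be trees on $X$ and let $Q$ be a set of quartets that are incompatible with $(T_1,T_2)$ and pairwise $T_1$-leg-disjoint. Then $d_{\mathrm{MP}}^t(T_1,T_2)\ge |Q|/27$ for all $t\in\{2,3,\dots\}\cup\{\infty\}$.
   Context: A tree on $X$ is an unrooted tree with leaf set $X$ whose internal vertices have degree at most $3$. A quartet is a $4$-element subset $q\subseteq X$; $T|_q$ is the tree obtained from the minimal subtree of $T$ spanning $q$ by suppressing degree-2 vertices, and $T|_q=ab|cd$ means $q=\{a,b,c,d\}$ and the $a$–$b$ path and $c$–$d$ path in $T$ are vertex-disjoint. $q$ is incompatible with $(T_1,T_2)$ if $T_1|_q\neq T_2|_q$. If $T_1|_q=ab|cd$, the legs of $q$ in $T_1$ are the path from $a$ to $b$ and the path from $c$ to $d$ in $T_1$. Two quartets are $T_1$-leg-disjoint if no edge of $T_1$ lies on a leg of both. A character on $X$ is a map $f:X\to S$, $S$ nonempty, $t$-state if $|S|=t$; $l_f(T)$ is the minimum over labellings of $V(T)$ extending $f$ of the number of edges with differently labelled endpoints; $d_{\mathrm{MP}}^t(T_1,T_2)=\max_f|l_f(T_1)-l_f(T_2)|$ over $t$-state characters (all characters if $t=\infty$). *)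

theory Defs
  imports Main "HOL-Library.Extended_Nat"
begin

definition is_path :: "'v set set \<Rightarrow> 'v list \<Rightarrow> bool" where
  "is_path E p \<longleftrightarrow> p \<noteq> [] \<and> distinct p \<and> (\<forall>i. Suc i < length p \<longrightarrow> {p ! i, p ! Suc i} \<in> E)"

definition path_edges :: "'v list \<Rightarrow> 'v set set" where
  "path_edges p = {{p ! i, p ! Suc i} | i. Suc i < length p}"

definition deg :: "'v set set \<Rightarrow> 'v \<Rightarrow> nat" where
  "deg E v = card {e \<in> E. v \<in> e}"

definition is_tree_on :: "'v set \<Rightarrow> 'v set set \<Rightarrow> 'v set \<Rightarrow> bool" where
  "is_tree_on V E X \<longleftrightarrow>
     finite V \<and> V \<noteq> {} \<and>
     (\<forall>e\<in>E. \<exists>u v. u \<in> V \<and> v \<in> V \<and> u \<noteq> v \<and> e = {u, v}) \<and>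
     (\<forall>u\<in>V. \<forall>v\<in>V. \<exists>!p. is_path E p \<and> hd p = u \<and> last p = v) \<and>
     X = {v \<in> V. deg E v \<le> 1} \<and>
     (\<forall>v \<in> V - X. deg E v \<le> 3)"

definition tpath :: "'v set set \<Rightarrow> 'v \<Rightarrow> 'v \<Rightarrow> 'v list" where
  "tpath E u v = (THE p. is_path E p \<and> hd p = u \<and> last p = v)"

definition quartet_top :: "'v set set \<Rightarrow> 'v set \<Rightarrow> 'v set set set" where
  "quartet_top E q = {{{a, b}, {c, d}} | a b c d.
      q = {a, b, c, d} \<and> card q = 4 \<and> set (tpath E a b) \<inter> set (tpath E c d) = {}}"

definition incompatible :: "'v set set \<Rightarrow> 'v set set \<Rightarrow> 'v set \<Rightarrow> bool" where
  "incompatible E1 E2 q \<longleftrightarrow> quartet_top E1 q \<noteq> quartet_top E2 q"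

definition leg_edges :: "'v set set \<Rightarrow> 'v set \<Rightarrow> 'v set set" where
  "leg_edges E q = \<Union> {path_edges (tpath E a b) \<union> path_edges (tpath E c d) | a b c d.
      {{a, b}, {c, d}} \<in> quartet_top E q}"

definition leg_disjoint :: "'v set set \<Rightarrow> 'v set \<Rightarrow> 'v set \<Rightarrow> bool" where
  "leg_disjoint E q q' \<longleftrightarrow> leg_edges E q \<inter> leg_edges E q' = {}"

definition states :: "enat \<Rightarrow> nat set" where
  "states t = {n. enat n < t}"

definition changes :: "'v set set \<Rightarrow> ('v \<Rightarrow> nat) \<Rightarrow> nat" where
  "changes E g = card {e \<in> E. \<exists>u v. e = {u, v} \<and> g u \<noteq> g v}"

definition pscore :: "'v set \<Rightarrow> 'v set set \<Rightarrow> 'v set \<Rightarrow> nat set \<Rightarrow> ('v \<Rightarrow> nat) \<Rightarrow> nat" where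
  "pscore V E X S f = (LEAST k. \<exists>g. (\<forall>x\<in>X. g x = f x) \<and> (\<forall>v\<in>V. g v \<in> S) \<and> changes E g = k)"

definition dMP :: "enat \<Rightarrow> 'v set \<Rightarrow> 'v set set \<Rightarrow> 'v set \<Rightarrow> 'v set set \<Rightarrow> 'v set \<Rightarrow> int" where
  "dMP t V1 E1 V2 E2 X = Max {\<bar>int (pscore V1 E1 X (states t) f) - int (pscore V2 E2 X (states t) f)\<bar>
      | f. \<forall>x\<in>X. f x \<in> states t}"

end

theory Submission
  imports Defs
begin
lemma is_path_single[simp]: "is_path E [x]"
  by (simp add: is_path_def)

lemma is_path_Cons2:
  "is_path E (x # y # rest) \<longleftrightarrow> {x,y} \<in> E \<and> x \<notin> set (y # rest) \<and> is_path E (y # rest)"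
proof -
  have "(\<forall>i. Suc i < length (x # y # rest) \<longrightarrow> {(x # y # rest) ! i, (x # y # rest) ! Suc i} \<in> E)
      \<longleftrightarrow> {x,y} \<in> E \<and> (\<forall>i. Suc i < length (y # rest) \<longrightarrow> {(y # rest) ! i, (y # rest) ! Suc i} \<in> E)"
    (is "?L \<longleftrightarrow> ?R")
  proof
    assume ?L
    then show ?R by (metis Suc_less_eq length_Cons nth_Cons_0 nth_Cons_Suc zero_less_Suc)
  next
    assume R: ?R
    show ?L
    proof (intro allI impI)
      fix i assume "Suc i < length (x # y # rest)"
      then show "{(x # y # rest) ! i, (x # y # rest) ! Suc i} \<in> E"
        using R by (cases i) auto
    qed
  qed
  then show ?thesis by (auto simp: is_path_def)
qed

lemma path_edges_single[simp]: "path_edges [x] = {}"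
  by (simp add: path_edges_def)

lemma path_edges_Cons2: "path_edges (x # y # rest) = insert {x,y} (path_edges (y # rest))"
proof -
  have "path_edges (x # y # rest) = {{(x#y#rest) ! i, (x#y#rest) ! Suc i} |i. Suc i < length (x#y#rest)}"
    by (simp add: path_edges_def)
  also have "\<dots> = insert {x,y} {{(y#rest) ! i, (y#rest) ! Suc i} |i. Suc i < length (y#rest)}"
  proof (intro equalityI subsetI)
    fix e assume "e \<in> {{(x#y#rest) ! i, (x#y#rest) ! Suc i} |i. Suc i < length (x#y#rest)}"
    then obtain i where i: "e = {(x#y#rest) ! i, (x#y#rest) ! Suc i}" "Suc i < length (x#y#rest)" by blast
    then show "e \<in> insert {x,y} {{(y#rest) ! i, (y#rest) ! Suc i} |i. Suc i < length (y#rest)}"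
      by (cases i) auto
  next
    fix e assume "e \<in> insert {x,y} {{(y#rest) ! i, (y#rest) ! Suc i} |i. Suc i < length (y#rest)}"
    then show "e \<in> {{(x#y#rest) ! i, (x#y#rest) ! Suc i} |i. Suc i < length (x#y#rest)}"
    proof
      assume "e = {x,y}" then show ?thesis by (rule_tac CollectI, rule_tac x=0 in exI) auto
    next
      assume "e \<in> {{(y#rest) ! i, (y#rest) ! Suc i} |i. Suc i < length (y#rest)}"
      then obtain i where "e = {(y#rest) ! i, (y#rest) ! Suc i}" "Suc i < length (y#rest)" by blast
      then show ?thesis by (rule_tac CollectI, rule_tac x="Suc i" in exI) auto
    qed
  qed
  also have "\<dots> = insert {x,y} (path_edges (y # rest))" by (simp add: path_edges_def)
  finally show ?thesis .
qed

lemma path_edges_subset: "is_path E p \<Longrightarrow> path_edges p \<subseteq> E"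
  by (auto simp: is_path_def path_edges_def)

lemma path_edges_in_set: "e \<in> path_edges p \<Longrightarrow> e \<subseteq> set p"
  by (auto simp: path_edges_def)

lemma is_path_append1:
  "is_path E p \<Longrightarrow> v \<notin> set p \<Longrightarrow> {last p, v} \<in> E \<Longrightarrow> is_path E (p @ [v])"
proof (induction p rule: induct_list012)
  case 1 then show ?case by (simp add: is_path_def)
next
  case (2 x) then show ?case by (simp add: is_path_Cons2)
next
  case (3 x y zs) then show ?case by (auto simp: is_path_Cons2)
qed

lemma path_edges_append1:
  "p \<noteq> [] \<Longrightarrow> path_edges (p @ [v]) = insert {last p, v} (path_edges p)"
proof (induction p rule: induct_list012)
  case 1 then show ?case by simp
next
  case (2 x) then show ?case by (simp add: path_edges_Cons2)
next
  case (3 x y zs) then show ?case by (simp add: path_edges_Cons2 insert_commute)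
qed

lemma is_path_prefix: "is_path E (xs @ ys) \<Longrightarrow> xs \<noteq> [] \<Longrightarrow> is_path E xs"
proof (induction xs rule: induct_list012)
  case 1 then show ?case by simp
next
  case (2 x) then show ?case by simp
next
  case (3 x y zs) then show ?case by (simp add: is_path_Cons2)
qed

lemma list_cross:
  "xs \<noteq> [] \<Longrightarrow> P (hd xs) \<Longrightarrow> \<not> P (last xs) \<Longrightarrow> \<exists>i. Suc i < length xs \<and> P (xs ! i) \<and> \<not> P (xs ! Suc i)"
proof (induction xs rule: induct_list012)
  case 1 then show ?case by simp
next
  case (2 x) then show ?case by simp
next
  case (3 x y zs)
  show ?case
  proof (cases "P y")
    case True
    with 3 obtain i where "Suc i < length (y # zs)" "P ((y#zs) ! i)" "\<not> P ((y#zs) ! Suc i)" by auto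
    then show ?thesis by (rule_tac x="Suc i" in exI) auto
  next
    case False
    then show ?thesis using 3 by (rule_tac x=0 in exI) auto
  qed
qed

lemma cross_edge: "Suc i < length p \<Longrightarrow> {p ! i, p ! Suc i} \<in> path_edges p"
  by (auto simp: path_edges_def)

locale tree =
  fixes V :: "'v set" and E :: "'v set set" and X :: "'v set"
  assumes T: "is_tree_on V E X"
begin

lemma finV: "finite V" and Vne: "V \<noteq> {}"
  and edge_form: "e \<in> E \<Longrightarrow> \<exists>u v. u \<in> V \<and> v \<in> V \<and> u \<noteq> v \<and> e = {u, v}"
  and uniq: "u \<in> V \<Longrightarrow> v \<in> V \<Longrightarrow> \<exists>!p. is_path E p \<and> hd p = u \<and> last p = v"
  and Xdef: "X = {v \<in> V. deg E v \<le> 1}"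
  and deg3: "v \<in> V - X \<Longrightarrow> deg E v \<le> 3"
  using T unfolding is_tree_on_def by blast+

lemma edge_V: "{x, y} \<in> E \<Longrightarrow> x \<in> V \<and> y \<in> V \<and> x \<noteq> y"
  using edge_form[of "{x,y}"] by (auto simp: doubleton_eq_iff)

lemma E_Pow: "E \<subseteq> Pow V"
  using edge_form by blast

lemma finE: "finite E"
  using E_Pow finV by (meson finite_Pow_iff finite_subset)

lemma X_V: "X \<subseteq> V" using Xdef by auto

lemma tp: "u \<in> V \<Longrightarrow> v \<in> V \<Longrightarrow> is_path E (tpath E u v) \<and> hd (tpath E u v) = u \<and> last (tpath E u v) = v"
  unfolding tpath_def by (rule theI') (rule uniq)

lemma tp_uniq: "u \<in> V \<Longrightarrow> v \<in> V \<Longrightarrow> is_path E p \<Longrightarrow> hd p = u \<Longrightarrow> last p = v \<Longrightarrow> tpath E u v = p"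
  using uniq[of u v] tp[of u v] by blast

lemma path_ne: "is_path E p \<Longrightarrow> p \<noteq> []" by (simp add: is_path_def)

lemma path_V: "is_path E p \<Longrightarrow> hd p \<in> V \<Longrightarrow> set p \<subseteq> V"
proof (induction p rule: induct_list012)
  case 1 then show ?case by simp
next
  case (2 x) then show ?case by simp
next
  case (3 x y zs) then show ?case using edge_V by (auto simp: is_path_Cons2)
qed

definition root where "root = (SOME r. r \<in> V)"
lemma root: "root \<in> V" unfolding root_def using Vne by (simp add: some_in_eq)

definition side :: "'v set \<Rightarrow> 'v \<Rightarrow> bool" where
  "side e x \<longleftrightarrow> e \<in> path_edges (tpath E root x)"

lemma side_E: "x \<in> V \<Longrightarrow> side e x \<Longrightarrow> e \<in> E"
  unfolding side_def using tp[OF root, of x] path_edges_subset by blast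

lemma step_aux:
  assumes e: "{u,v} \<in> E" and nv: "v \<notin> set (tpath E root u)"
  shows "side e u \<noteq> side e v \<longleftrightarrow> e = {u,v}"
proof -
  have uv: "u \<in> V" "v \<in> V" using edge_V[OF e] by auto
  let ?p = "tpath E root u"
  have p: "is_path E ?p" "hd ?p = root" "last ?p = u" using tp[OF root uv(1)] by auto
  have ne: "?p \<noteq> []" using p path_ne by blast
  have pp: "is_path E (?p @ [v])" using is_path_append1[OF p(1) nv] p(3) e by simp
  have "tpath E root v = ?p @ [v]"
    by (rule tp_uniq[OF root uv(2) pp]) (use ne p in auto)
  then have "path_edges (tpath E root v) = insert {u,v} (path_edges ?p)"
    using path_edges_append1[OF ne] p(3) by simp
  moreover have "{u,v} \<notin> path_edges ?p" using path_edges_in_set nv by blast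
  ultimately show ?thesis unfolding side_def by auto
qed

lemma step:
  assumes e: "{u,v} \<in> E"
  shows "side e' u \<noteq> side e' v \<longleftrightarrow> e' = {u,v}"
proof (cases "v \<in> set (tpath E root u)")
  case False then show ?thesis using step_aux[OF e] by blast
next
  case True
  have uv: "u \<in> V" "v \<in> V" "u \<noteq> v" using edge_V[OF e] by auto
  let ?p = "tpath E root u"
  have p: "is_path E ?p" "hd ?p = root" "last ?p = u" using tp[OF root uv(1)] by auto
  obtain xs ys where sp: "?p = xs @ v # ys" using True split_list by metis
  have pp: "is_path E (xs @ [v])" using is_path_prefix[of E "xs @ [v]" ys] p(1) sp by simp
  have "tpath E root v = xs @ [v]"
    by (rule tp_uniq[OF root uv(2) pp]) (use p sp in \<open>auto simp: hd_append split: if_splits\<close>)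
  moreover have "u \<notin> set (xs @ [v])"
  proof
    assume "u \<in> set (xs @ [v])"
    then have "u \<in> set xs" using uv by auto
    moreover have "u \<in> set (v # ys)" using p(3) sp by (metis last_ConsL last_appendR last_in_set list.discI)
    moreover have "distinct (xs @ v # ys)" using p(1) sp by (simp add: is_path_def)
    ultimately show False by auto
  qed
  ultimately have "u \<notin> set (tpath E root v)" by simp
  then show ?thesis using step_aux[of v u] e by (auto simp: insert_commute)
qed

lemma K:
  assumes "is_path E p" "hd p \<in> V"
  shows "e \<in> path_edges p \<longleftrightarrow> side e (hd p) \<noteq> side e (last p)"
  using assms
proof (induction p rule: induct_list012)
  case 1 then show ?case by (simp add: is_path_def)
next
  case (2 x) then show ?case by simp
next
  case (3 x y zs)
  have xy: "{x,y} \<in> E" "x \<notin> set (y # zs)" "is_path E (y # zs)" using 3(3) by (auto simp: is_path_Cons2)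
  have yV: "y \<in> V" using edge_V[OF xy(1)] by simp
  have IH: "e \<in> path_edges (y # zs) \<longleftrightarrow> side e y \<noteq> side e (last (y # zs))" using 3(2)[OF xy(3)] yV by simp
  have nin: "{x,y} \<notin> path_edges (y # zs)" using path_edges_in_set xy(2) by blast
  have st: "side e x \<noteq> side e y \<longleftrightarrow> e = {x,y}" using step[OF xy(1)] .
  show ?case using IH nin st by (auto simp: path_edges_Cons2)
qed

lemma const:
  assumes "is_path E p" "hd p \<in> V" "e \<notin> path_edges p" "x \<in> set p"
  shows "side e x = side e (hd p)"
  using assms
proof (induction p rule: induct_list012)
  case 1 then show ?case by simp
next
  case (2 z) then show ?case by simp
next
  case (3 z y zs)
  have xy: "{z,y} \<in> E" "is_path E (y # zs)" using 3(3) by (auto simp: is_path_Cons2)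
  have yV: "y \<in> V" using edge_V[OF xy(1)] by simp
  have ne: "e \<noteq> {z,y}" "e \<notin> path_edges (y # zs)" using 3(5) by (auto simp: path_edges_Cons2)
  have st: "side e z = side e y" using step[OF xy(1)] ne(1) by blast
  show ?case
  proof (cases "x = z")
    case True then show ?thesis by simp
  next
    case False
    then have "x \<in> set (y # zs)" using 3(6) by simp
    then show ?thesis using 3(2)[OF xy(2) _ ne(2)] yV st by simp
  qed
qed

lemma sep: "u \<in> V \<Longrightarrow> v \<in> V \<Longrightarrow> e \<in> path_edges (tpath E u v) \<longleftrightarrow> side e u \<noteq> side e v"
  using K[of "tpath E u v" e] tp[of u v] by simp

end

lemma two_eq: "u \<in> {p,r} \<Longrightarrow> v \<in> {p,r} \<Longrightarrow> u \<noteq> v \<Longrightarrow> {u,v} = {p,r}"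
  by auto
lemma comb4_aux:
  assumes dist2: "x \<noteq> y" "x \<noteq> z" "x \<noteq> w" "y \<noteq> z" "y \<noteq> w" "z \<noteq> w"
    and q: "{x,y,z,w} = {a,b,c,d}"
    and P: "P a = P b" "P c = P d" "P a \<noteq> P c" "P x = P y"
  shows "{{a,b},{c,d}} = {{x,y},{z,w}}"
proof -
  have m: "x \<in> {a,b,c,d}" "y \<in> {a,b,c,d}" "z \<in> {a,b,c,d}" "w \<in> {a,b,c,d}" using q by blast+
  show ?thesis
  proof (cases "P x = P a")
    case True
    then have 1: "x \<in> {a,b}" "y \<in> {a,b}" using m P True by (metis insert_iff)+
    have "z \<notin> {x,y}" using dist2 by simp
    then have "z \<notin> {a,b}" using two_eq[OF 1 dist2(1)] by simp
    then have "z \<in> {c,d}" using m(3) by blast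
    moreover have "w \<notin> {x,y}" using dist2 by simp
    then have "w \<notin> {a,b}" using two_eq[OF 1 dist2(1)] by simp
    then have "w \<in> {c,d}" using m(4) by blast
    ultimately have "{z,w} = {c,d}" using two_eq dist2(6) by blast
    then show ?thesis using two_eq[OF 1 dist2(1)] by simp
  next
    case False
    then have 1: "x \<in> {c,d}" "y \<in> {c,d}" using m P False by (metis insert_iff)+
    have "z \<notin> {x,y}" using dist2 by simp
    then have "z \<notin> {c,d}" using two_eq[OF 1 dist2(1)] by simp
    then have "z \<in> {a,b}" using m(3) by blast
    moreover have "w \<notin> {x,y}" using dist2 by simp
    then have "w \<notin> {c,d}" using two_eq[OF 1 dist2(1)] by simp
    then have "w \<in> {a,b}" using m(4) by blast
    ultimately have "{z,w} = {a,b}" using two_eq dist2(6) by blast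
    then show ?thesis using two_eq[OF 1 dist2(1)] by (simp add: insert_commute)
  qed
qed

lemma c3: "card {x,y,z::'a} \<le> 3"
  by (auto simp: card_insert_if)
lemma card4_dist:
  assumes "card {a,b,c,d} = 4"
  shows "a \<noteq> b \<and> a \<noteq> c \<and> a \<noteq> d \<and> b \<noteq> c \<and> b \<noteq> d \<and> c \<noteq> d"
proof (rule ccontr)
  assume "\<not> ?thesis"
  then obtain x y z where "{a,b,c,d} = {x,y,z}" by auto
  then show False using assms c3[of x y z] by simp
qed

lemma comb4:
  assumes "card {a,b,c,d} = 4" "{x,y,z,w} = {a,b,c,d}"
    and "P a = P b" "P c = P d" "P a \<noteq> P c"
    and "{{a,b},{c,d}} \<noteq> {{x,y},{z,w}}"
  shows "P x \<noteq> P y \<and> P z \<noteq> P w"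
proof -
  have "card {x,y,z,w} = 4" using assms(1,2) by simp
  then have d: "x \<noteq> y" "x \<noteq> z" "x \<noteq> w" "y \<noteq> z" "y \<noteq> w" "z \<noteq> w"
    using card4_dist[of x y z w] by blast+
  have q2: "{z,w,x,y} = {a,b,c,d}" using assms(2) by (simp add: insert_commute)
  show ?thesis
  proof (intro conjI notI)
    assume "P x = P y"
    then show False using comb4_aux[OF d assms(2) assms(3-5)] assms(6) by simp
  next
    assume "P z = P w"
    then have "{{a,b},{c,d}} = {{z,w},{x,y}}"
      using comb4_aux[OF d(6) _ _ _ _ d(1) q2 assms(3-5)] d by simp
    then show False using assms(6) by (simp add: insert_commute)
  qed
qed

context tree begin

definition D where "D a b c d \<longleftrightarrow> set (tpath E a b) \<inter> set (tpath E c d) = {}"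

lemma hd_in_tp: "u \<in> V \<Longrightarrow> v \<in> V \<Longrightarrow> u \<in> set (tpath E u v)"
  using tp[of u v] path_ne by (metis list.set_sel(1))
lemma last_in_tp: "u \<in> V \<Longrightarrow> v \<in> V \<Longrightarrow> v \<in> set (tpath E u v)"
  using tp[of u v] path_ne by (metis last_in_set)

lemma F1_rev:
  assumes V: "a \<in> V" "b \<in> V" "c \<in> V" "d \<in> V"
    and s: "side e a = side e b" "side e c = side e d" "side e a \<noteq> side e c"
  shows "D a b c d"
  unfolding D_def
proof (rule ccontr)
  assume "set (tpath E a b) \<inter> set (tpath E c d) \<noteq> {}"
  then obtain w where w: "w \<in> set (tpath E a b)" "w \<in> set (tpath E c d)" by blast
  have "e \<notin> path_edges (tpath E a b)" using sep[of a b] V s by simp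
  then have "side e w = side e a" using const[of "tpath E a b" e w] tp[of a b] V w by simp
  moreover have "e \<notin> path_edges (tpath E c d)" using sep[of c d] V s by simp
  then have "side e w = side e c" using const[of "tpath E c d" e w] tp[of c d] V w by simp
  ultimately show False using s by simp
qed

lemma F1:
  assumes V: "a \<in> V" "b \<in> V" "c \<in> V" "d \<in> V" and DD: "D a b c d"
  shows "\<exists>e. side e a = side e b \<and> side e c = side e d \<and> side e a \<noteq> side e c"
proof -
  let ?p = "tpath E a c" and ?S = "set (tpath E a b)"
  have p: "is_path E ?p" "hd ?p = a" "last ?p = c" using tp[of a c] V by auto
  have "a \<in> ?S" using hd_in_tp V by simp
  moreover have "c \<notin> ?S" using hd_in_tp[of c d] V DD unfolding D_def by blast
  ultimately obtain i where i: "Suc i < length ?p" "?p ! i \<in> ?S" "?p ! Suc i \<notin> ?S"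
    using list_cross[of ?p "\<lambda>x. x \<in> ?S"] p path_ne by auto
  let ?e = "{?p ! i, ?p ! Suc i}"
  have "?e \<in> path_edges ?p" using cross_edge[OF i(1)] .
  then have 1: "side ?e a \<noteq> side ?e c" using sep[of a c] V by simp
  have "?e \<notin> path_edges (tpath E a b)"
  proof
    assume "?e \<in> path_edges (tpath E a b)"
    then have "?e \<subseteq> ?S" by (rule path_edges_in_set)
    then show False using i(3) by simp
  qed
  then have 2: "side ?e a = side ?e b" using sep[of a b] V by simp
  have "?e \<notin> path_edges (tpath E c d)"
  proof
    assume "?e \<in> path_edges (tpath E c d)"
    then have "?e \<subseteq> set (tpath E c d)" by (rule path_edges_in_set)
    then show False using i(2) DD unfolding D_def by auto
  qed
  then have 3: "side ?e c = side ?e d" using sep[of c d] V by simp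
  show ?thesis using 1 2 3 by (intro exI[of _ ?e]) simp
qed

end

lemma sum_pm1:
  assumes "finite A"
  shows "(\<Sum>x\<in>A. if P x then -1 else (1::int)) = int (card {x\<in>A. \<not> P x}) - int (card {x\<in>A. P x})"
proof -
  have "(\<Sum>x\<in>A. if P x then -1 else (1::int)) = (\<Sum>x\<in>A \<inter> {x. P x}. -1) + (\<Sum>x\<in>A \<inter> - {x. P x}. 1)"
    by (rule sum.If_cases[OF assms])
  also have "A \<inter> {x. P x} = {x\<in>A. P x}" by auto
  also have "A \<inter> - {x. P x} = {x\<in>A. \<not> P x}" by auto
  finally show ?thesis by simp
qed

context tree begin

lemma G:
  assumes V: "a \<in> V" "b \<in> V" "c \<in> V" "d \<in> V" and c4: "card {a,b,c,d} = 4"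
    and D1: "D a b c d" and D2: "D x y z w" and q: "{x,y,z,w} = {a,b,c,d}"
  shows "{{a,b},{c,d}} = {{x,y},{z,w}}"
proof (rule ccontr)
  assume ne: "{{a,b},{c,d}} \<noteq> {{x,y},{z,w}}"
  obtain e where e: "side e a = side e b" "side e c = side e d" "side e a \<noteq> side e c"
    using F1[OF V D1] by blast
  have s: "side e x \<noteq> side e y" "side e z \<noteq> side e w"
    using comb4[OF c4 q e ne] by auto
  have "{x,y,z,w} \<subseteq> V" using q V by simp
  then have xV: "x \<in> V" "y \<in> V" "z \<in> V" "w \<in> V" by simp_all
  have eE: "e \<in> E" using side_E xV s by blast
  then obtain u v where uv: "e = {u,v}" using edge_form by blast
  have "e \<in> path_edges (tpath E x y)" using sep xV s by simp
  then have 1: "u \<in> set (tpath E x y)" using path_edges_in_set uv by blast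
  have "e \<in> path_edges (tpath E z w)" using sep xV s by simp
  then have 2: "u \<in> set (tpath E z w)" using path_edges_in_set uv by blast
  show False using 1 2 D2 unfolding D_def by blast
qed

lemma first_edge:
  assumes "w \<in> V" "x \<in> V" "w \<noteq> x"
  shows "\<exists>w'. {w,w'} \<in> E \<and> {w,w'} \<in> path_edges (tpath E w x)"
proof -
  have p: "is_path E (tpath E w x)" "hd (tpath E w x) = w" "last (tpath E w x) = x"
    using tp assms by auto
  show ?thesis
  proof (cases "tpath E w x")
    case Nil then show ?thesis using p path_ne by blast
  next
    case (Cons y ys)
    show ?thesis
    proof (cases ys)
      case Nil then show ?thesis using p Cons assms by auto
    next
      case (Cons y' rest)
      have "y = w" using p \<open>tpath E w x = y # ys\<close> by simp
      then show ?thesis using p \<open>tpath E w x = y # ys\<close> Cons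
        by (auto simp: is_path_Cons2 path_edges_Cons2)
    qed
  qed
qed

definition sepset where "sepset w x = {e\<in>E. side e w \<noteq> side e x}"

lemma fin_sepset: "finite (sepset w x)"
  unfolding sepset_def using finE by simp

lemma adj:
  assumes f: "{w,w'} \<in> E"
  shows "int (card (sepset w' x)) = int (card (sepset w x)) + (if {w,w'} \<in> sepset w x then -1 else 1)"
proof -
  have st: "\<And>e. side e w \<noteq> side e w' \<longleftrightarrow> e = {w,w'}" using step[OF f] .
  have eq: "sepset w' x = (if {w,w'} \<in> sepset w x then sepset w x - {{w,w'}} else insert {w,w'} (sepset w x))"
  proof -
    have sw: "\<And>e. side e w' = (if e = {w,w'} then \<not> side e w else side e w)" using st by metis
    show ?thesis unfolding sepset_def using f by (auto simp: sw)
  qed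
  show ?thesis
  proof (cases "{w,w'} \<in> sepset w x")
    case True
    then have "card (sepset w x) \<ge> 1" using fin_sepset card_0_eq by (metis empty_iff less_one not_le)
    then show ?thesis using True eq fin_sepset by (simp add: card_Diff_singleton of_nat_diff)
  next
    case False then show ?thesis using eq fin_sepset by simp
  qed
qed

end

context tree begin

lemma card_neg:
  assumes "finite q"
  shows "card {x\<in>q. \<not> P x} = card q - card {x\<in>q. P x}"
proof -
  have "{x\<in>q. \<not> P x} = q - {x\<in>q. P x}" by auto
  then show ?thesis using assms by (simp add: card_Diff_subset)
qed

lemma F2:
  assumes qX: "q \<subseteq> X" and c4: "card q = 4"
  shows "\<exists>e\<in>E. card {x\<in>q. side e x} = 2"
proof (rule ccontr)
  assume H: "\<not> ?thesis"
  have finq: "finite q" using c4 card_ge_0_finite by force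
  have qV: "q \<subseteq> V" using qX X_V by blast
  define \<Phi> where "\<Phi> w = (\<Sum>x\<in>q. card (sepset w x))" for w
  obtain w where w: "w \<in> V" "\<And>v. v \<in> V \<Longrightarrow> \<Phi> w \<le> \<Phi> v"
    using ex_has_least_nat[of "\<lambda>w. w \<in> V" root \<Phi>] root by blast
  have central: "card {x\<in>q. side e x \<noteq> side e w} \<le> 1" if eE: "e \<in> E" for e
  proof (rule ccontr)
    define Os where "Os = {x\<in>q. side e x \<noteq> side e w}"
    assume "\<not> card {x\<in>q. side e x \<noteq> side e w} \<le> 1"
    then have cO1: "card Os > 1" unfolding Os_def by simp
    have n2: "card {x\<in>q. side e x} \<noteq> 2" using H eE by blast
    have "card Os \<noteq> 2"
    proof (cases "side e w")
      case True
      then have "Os = {x\<in>q. \<not> side e x}" unfolding Os_def by auto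
      then show ?thesis using card_neg[OF finq, of "side e"] c4 n2 by simp
    next
      case False
      then have "Os = {x\<in>q. side e x}" unfolding Os_def by auto
      then show ?thesis using n2 by simp
    qed
    with cO1 have cO: "card Os \<ge> 3" by linarith
    then obtain x0 where x0: "x0 \<in> Os" by fastforce
    have x0V: "x0 \<in> V" using x0 qV unfolding Os_def by blast
    have x0s: "side e x0 \<noteq> side e w" using x0 unfolding Os_def by simp
    then have "x0 \<noteq> w" by blast
    then obtain w' where f: "{w,w'} \<in> E" "{w,w'} \<in> path_edges (tpath E w x0)"
      using first_edge[OF w(1) x0V] by blast
    have w'V: "w' \<in> V" using edge_V[OF f(1)] by simp
    have fs: "side {w,w'} w \<noteq> side {w,w'} x0" using f(2) sep[OF w(1) x0V] by simp
    have Osub: "Os \<subseteq> {x\<in>q. {w,w'} \<in> sepset w x}"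
    proof
      fix x assume xO: "x \<in> Os"
      then have xq: "x \<in> q" and xV: "x \<in> V" and xs: "side e x \<noteq> side e w"
        using qV unfolding Os_def by auto
      have "side {w,w'} w \<noteq> side {w,w'} x"
      proof
        assume eq: "side {w,w'} w = side {w,w'} x"
        then have "{w,w'} \<in> path_edges (tpath E x0 x)" using sep[OF x0V xV] fs by simp
        then have wp: "w \<in> set (tpath E x0 x)" using path_edges_in_set by blast
        have "side e x0 = side e x" using xs x0s by blast
        then have "e \<notin> path_edges (tpath E x0 x)" using sep[OF x0V xV] by simp
        then have "side e w = side e x0" using const[of "tpath E x0 x" e w] tp[OF x0V xV] wp x0V by simp
        then show False using x0s by simp
      qed
      then show "x \<in> {x\<in>q. {w,w'} \<in> sepset w x}" using xq f(1) unfolding sepset_def by simp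
    qed
    have ck: "card {x\<in>q. {w,w'} \<in> sepset w x} \<ge> 3"
      using card_mono[OF _ Osub] finq cO by simp
    have "int (\<Phi> w') = (\<Sum>x\<in>q. int (card (sepset w' x)))" unfolding \<Phi>_def by simp
    also have "\<dots> = (\<Sum>x\<in>q. int (card (sepset w x)) + (if {w,w'} \<in> sepset w x then -1 else 1))"
      using adj[OF f(1)] by simp
    also have "\<dots> = int (\<Phi> w) + (\<Sum>x\<in>q. if {w,w'} \<in> sepset w x then -1 else (1::int))"
      unfolding \<Phi>_def by (simp add: sum.distrib)
    also have "(\<Sum>x\<in>q. if {w,w'} \<in> sepset w x then -1 else (1::int))
        = int (card {x\<in>q. \<not> {w,w'} \<in> sepset w x}) - int (card {x\<in>q. {w,w'} \<in> sepset w x})"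
      by (rule sum_pm1[OF finq])
    finally have eqn: "int (\<Phi> w') = int (\<Phi> w) + (int (card {x\<in>q. \<not> {w,w'} \<in> sepset w x}) - int (card {x\<in>q. {w,w'} \<in> sepset w x}))" .
    have "card {x\<in>q. {w,w'} \<in> sepset w x} \<le> card q" using finq by (simp add: card_mono)
    then have "card {x\<in>q. \<not> {w,w'} \<in> sepset w x} + card {x\<in>q. {w,w'} \<in> sepset w x} = 4"
      using card_neg[OF finq, of "\<lambda>x. {w,w'} \<in> sepset w x"] c4 by simp
    then have "int (\<Phi> w') < int (\<Phi> w)" using ck eqn by linarith
    then show False using w(2)[OF w'V] by simp
  qed
  have "\<forall>x\<in>q - {w}. \<exists>f. f \<in> E \<and> w \<in> f \<and> side f w \<noteq> side f x"
  proof
    fix x assume x: "x \<in> q - {w}"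
    then have xV: "x \<in> V" using qV by blast
    obtain w' where f: "{w,w'} \<in> E" "{w,w'} \<in> path_edges (tpath E w x)"
      using first_edge[OF w(1) xV] x by blast
    then show "\<exists>f. f \<in> E \<and> w \<in> f \<and> side f w \<noteq> side f x"
      using sep[OF w(1) xV] by blast
  qed
  then obtain F where F: "\<And>x. x \<in> q - {w} \<Longrightarrow> F x \<in> E \<and> w \<in> F x \<and> side (F x) w \<noteq> side (F x) x"
    by metis
  have inj: "inj_on F (q - {w})"
  proof (rule inj_onI)
    fix x y assume xy: "x \<in> q - {w}" "y \<in> q - {w}" "F x = F y"
    let ?S = "{z\<in>q. side (F x) z \<noteq> side (F x) w}"
    have "x \<in> ?S" "y \<in> ?S" using F[OF xy(1)] F[OF xy(2)] xy by auto
    moreover have "card ?S \<le> 1" using central F[OF xy(1)] by blast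
    moreover have "finite ?S" using finq by simp
    ultimately show "x = y" using card_le_Suc0_iff_eq[of ?S] unfolding One_nat_def by blast
  qed
  have "F ` (q - {w}) \<subseteq> {e\<in>E. w \<in> e}"
  proof (rule image_subsetI)
    fix x assume "x \<in> q - {w}"
    then show "F x \<in> {e\<in>E. w \<in> e}" using F[of x] by simp
  qed
  moreover have "finite {e\<in>E. w \<in> e}" using finE by simp
  ultimately have "card (q - {w}) \<le> deg E w"
    unfolding deg_def by (rule card_inj_on_le[OF inj])
  moreover have "card (q - {w}) \<ge> 3" using c4 finq card_Diff_singleton_if[of q w] by simp
  moreover have "w \<in> X \<Longrightarrow> deg E w \<le> 1" by (subst (asm) Xdef) simp
  moreover have "w \<notin> X \<Longrightarrow> card (q - {w}) = 4"
  proof -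
    assume "w \<notin> X"
    then have "w \<notin> q" using qX by blast
    then show ?thesis using c4 by simp
  qed
  moreover have "w \<notin> X \<Longrightarrow> deg E w \<le> 3" using deg3 w(1) by blast
  ultimately show False by linarith
qed

end

lemma filter_insert: "{x \<in> insert a A. P x} = (if P a then insert a {x\<in>A. P x} else {x\<in>A. P x})"
  by auto

lemma count4:
  assumes "card {a,b,c,d} = 4"
  shows "card {x\<in>{a,b,c,d}. P x} = (if P a then 1 else 0) + (if P b then 1 else 0) + (if P c then 1 else 0) + (if P d then 1 else 0)"
proof -
  have d: "a \<noteq> b" "a \<noteq> c" "a \<noteq> d" "b \<noteq> c" "b \<noteq> d" "c \<noteq> d" using card4_dist[OF assms] by blast+
  show ?thesis unfolding filter_insert using d by (simp add: card_insert_if)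
qed

context tree begin

lemma top_mem:
  assumes "q = {a,b,c,d}" "card q = 4" "D a b c d"
  shows "{{a,b},{c,d}} \<in> quartet_top E q"
  using assms unfolding quartet_top_def D_def by blast

lemma top_unique:
  assumes V: "a \<in> V" "b \<in> V" "c \<in> V" "d \<in> V" and q: "q = {a,b,c,d}" "card q = 4" and DD: "D a b c d"
  shows "quartet_top E q = {{{a,b},{c,d}}}"
proof (intro equalityI subsetI)
  fix s assume "s \<in> quartet_top E q"
  then obtain x y z w where s: "s = {{x,y},{z,w}}" "q = {x,y,z,w}" "D x y z w"
    unfolding quartet_top_def D_def by blast
  have "{{a,b},{c,d}} = {{x,y},{z,w}}" using G[OF V _ DD s(3)] q s(2) by simp
  then show "s \<in> {{{a,b},{c,d}}}" using s by simp
next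
  fix s assume "s \<in> {{{a,b},{c,d}}}"
  then show "s \<in> quartet_top E q" using top_mem[OF q DD] by simp
qed

end

locale two_trees =
  T1: tree V1 E1 X + T2: tree V2 E2 X
  for V1 E1 V2 E2 X
begin

lemma quartet_witness:
  assumes qX: "q \<subseteq> X" and c4: "card q = 4" and inc: "quartet_top E1 q \<noteq> quartet_top E2 q"
  shows "\<exists>a b c d e. q = {a,b,c,d} \<and> {{a,b},{c,d}} \<in> quartet_top E1 q \<and> T1.D a b c d \<and>
     e \<in> E2 \<and> T2.side e a \<noteq> T2.side e b \<and> T2.side e c \<noteq> T2.side e d"
proof -
  have finq: "finite q" using c4 card_ge_0_finite by force
  have qV1: "q \<subseteq> V1" using qX T1.X_V by blast
  have qV2: "q \<subseteq> V2" using qX T2.X_V by blast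
  obtain e1 where e1: "e1 \<in> E1" "card {x\<in>q. T1.side e1 x} = 2" using T1.F2[OF qX c4] by blast
  then obtain a b where ab: "{x\<in>q. T1.side e1 x} = {a,b}" "a \<noteq> b" by (meson card_2_iff)
  have "card (q - {x\<in>q. T1.side e1 x}) = 2" using e1 c4 finq by (simp add: card_Diff_subset)
  then obtain c d where cd: "q - {x\<in>q. T1.side e1 x} = {c,d}" "c \<noteq> d" by (meson card_2_iff)
  have q: "q = {a,b,c,d}" using ab cd by blast
  have sa: "T1.side e1 a" "T1.side e1 b" "a \<in> q" "b \<in> q" using ab by blast+
  have sc: "\<not> T1.side e1 c" "\<not> T1.side e1 d" "c \<in> q" "d \<in> q" using cd by blast+
  have c4': "card {a,b,c,d} = 4" using q c4 by simp
  have V1: "a \<in> V1" "b \<in> V1" "c \<in> V1" "d \<in> V1" using qV1 sa sc by blast+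
  have V2: "a \<in> V2" "b \<in> V2" "c \<in> V2" "d \<in> V2" using qV2 sa sc by blast+
  have D1: "T1.D a b c d" using T1.F1_rev[OF V1, of e1] sa sc by simp
  have mem: "{{a,b},{c,d}} \<in> quartet_top E1 q" using T1.top_mem[OF q c4 D1] .
  show ?thesis
  proof (rule ccontr)
    assume nex: "\<not> ?thesis"
    obtain e2 where e2: "e2 \<in> E2" "card {x\<in>q. T2.side e2 x} = 2" using T2.F2[OF qX c4] by blast
    have n: "\<not> (T2.side e2 a \<noteq> T2.side e2 b \<and> T2.side e2 c \<noteq> T2.side e2 d)"
      using nex q mem D1 e2(1) by blast
    have cnt: "(if T2.side e2 a then 1 else 0) + (if T2.side e2 b then 1 else 0) + (if T2.side e2 c then 1 else 0) + (if T2.side e2 d then 1 else (0::nat)) = 2"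
      using e2(2) count4[OF c4', of "T2.side e2"] q by simp
    have pat: "T2.side e2 a = T2.side e2 b \<and> T2.side e2 c = T2.side e2 d \<and> T2.side e2 a \<noteq> T2.side e2 c"
      using n cnt by (cases "T2.side e2 a"; cases "T2.side e2 b"; cases "T2.side e2 c"; cases "T2.side e2 d") auto
    have D2: "T2.D a b c d" by (rule T2.F1_rev[OF V2, of e2]) (use pat in auto)
    have "quartet_top E1 q = {{{a,b},{c,d}}}" using T1.top_unique[OF V1 q c4 D1] .
    moreover have "quartet_top E2 q = {{{a,b},{c,d}}}" using T2.top_unique[OF V2 q c4 D2] .
    ultimately show False using inc by simp
  qed
qed

end

lemma pow_parity:
  assumes fin: "finite A" and x: "x \<in> A" "x \<in> S"
  shows "2 * card {C\<in>Pow A. odd (card (C \<inter> S))} = 2 ^ card A"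
proof -
  define \<phi> where "\<phi> C = (if x \<in> C then C - {x} else insert x C)" for C
  define Od where "Od = {C\<in>Pow A. odd (card (C \<inter> S))}"
  define Ev where "Ev = {C\<in>Pow A. \<not> odd (card (C \<inter> S))}"
  have finC: "\<And>C. C \<in> Pow A \<Longrightarrow> finite (C \<inter> S)" using fin by (meson PowD finite_Int finite_subset)
  have par: "odd (card (\<phi> C \<inter> S)) \<longleftrightarrow> \<not> odd (card (C \<inter> S))" if C: "C \<in> Pow A" for C
  proof (cases "x \<in> C")
    case True
    then have e: "\<phi> C \<inter> S = (C \<inter> S) - {x}" unfolding \<phi>_def by auto
    have xi: "x \<in> C \<inter> S" using True x by simp
    have "card (C \<inter> S) = Suc (card ((C \<inter> S) - {x}))" using card.remove[OF finC[OF C] xi] .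
    then show ?thesis using e by simp
  next
    case False
    then have "\<phi> C \<inter> S = insert x (C \<inter> S)" unfolding \<phi>_def using x by auto
    moreover have "x \<notin> C \<inter> S" using False by simp
    ultimately show ?thesis using finC[OF C] by simp
  qed
  have inv: "\<phi> (\<phi> C) = C" for C unfolding \<phi>_def by auto
  have pow: "C \<in> Pow A \<Longrightarrow> \<phi> C \<in> Pow A" for C unfolding \<phi>_def using x by auto
  have "bij_betw \<phi> Od Ev"
  proof (rule bij_betw_byWitness[where f'=\<phi>])
    show "\<forall>a\<in>Od. \<phi> (\<phi> a) = a" using inv by simp
    show "\<forall>a\<in>Ev. \<phi> (\<phi> a) = a" using inv by simp
    show "\<phi> ` Od \<subseteq> Ev" unfolding Od_def Ev_def using par pow by auto
    show "\<phi> ` Ev \<subseteq> Od" unfolding Od_def Ev_def using par pow by auto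
  qed
  then have "card Od = card Ev" by (rule bij_betw_same_card)
  moreover have "card Od + card Ev = card (Pow A)"
  proof -
    have "Pow A = Od \<union> Ev" "Od \<inter> Ev = {}" unfolding Od_def Ev_def by auto
    moreover have "finite Od" "finite Ev" unfolding Od_def Ev_def using fin by auto
    ultimately show ?thesis by (metis card_Un_disjoint)
  qed
  ultimately show ?thesis unfolding Od_def using card_Pow[of A] fin by simp
qed

lemma pow_card_sum:
  assumes fin: "finite A"
  shows "2 * (\<Sum>C\<in>Pow A. card C) = card A * 2 ^ card A"
proof -
  have "(\<Sum>C\<in>Pow A. card C) = (\<Sum>C\<in>Pow A. \<Sum>x\<in>A. if x \<in> C then 1 else (0::nat))"
  proof (rule sum.cong[OF refl])
    fix C assume "C \<in> Pow A"
    then have "C = A \<inter> C" by auto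
    then show "card C = (\<Sum>x\<in>A. if x \<in> C then 1 else 0)"
      using sum.inter_filter[OF fin, of "\<lambda>_. 1::nat" "\<lambda>x. x \<in> C"] by (simp add: Int_def)
  qed
  also have "\<dots> = (\<Sum>x\<in>A. \<Sum>C\<in>Pow A. if x \<in> C then 1 else (0::nat))" by (rule sum.swap)
  also have "\<dots> = (\<Sum>x\<in>A. card {C\<in>Pow A. x \<in> C})"
    using fin by (simp add: sum.inter_filter[symmetric])
  finally have "2 * (\<Sum>C\<in>Pow A. card C) = (\<Sum>x\<in>A. 2 * card {C\<in>Pow A. x \<in> C})"
    by (simp add: sum_distrib_left)
  also have "\<dots> = (\<Sum>x\<in>A. 2 ^ card A)"
  proof (rule sum.cong[OF refl])
    fix x assume x: "x \<in> A"
    have "{C\<in>Pow A. x \<in> C} = {C\<in>Pow A. odd (card (C \<inter> {x}))}" by (auto simp: Int_insert_right)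
    then show "2 * card {C\<in>Pow A. x \<in> C} = 2 ^ card A" using pow_parity[OF fin x, of "{x}"] by simp
  qed
  finally show ?thesis by simp
qed

lemma card_filter_swap:
  assumes "finite P" "finite K"
  shows "(\<Sum>C\<in>P. card {k\<in>K. R C k}) = (\<Sum>k\<in>K. card {C\<in>P. R C k})"
proof -
  have "(\<Sum>C\<in>P. card {k\<in>K. R C k}) = (\<Sum>C\<in>P. \<Sum>k\<in>K. if R C k then 1 else (0::nat))"
    using assms by (simp add: sum.inter_filter[symmetric])
  also have "\<dots> = (\<Sum>k\<in>K. \<Sum>C\<in>P. if R C k then 1 else (0::nat))" by (rule sum.swap)
  also have "\<dots> = (\<Sum>k\<in>K. card {C\<in>P. R C k})"
    using assms by (simp add: sum.inter_filter[symmetric])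
  finally show ?thesis .
qed

lemma par_arith: "(a::nat) = x + z \<Longrightarrow> b = y + z \<Longrightarrow> c = x + y \<Longrightarrow> (a mod 2 \<noteq> b mod 2 \<longleftrightarrow> odd c)"
  by presburger

lemma parity_sum:
  assumes "finite C"
  shows "(card {e\<in>C. P e} mod 2 \<noteq> card {e\<in>C. Q e} mod 2) \<longleftrightarrow> odd (card {e\<in>C. P e \<noteq> Q e})"
proof -
  let ?A = "{e\<in>C. P e}" and ?B = "{e\<in>C. Q e}"
  have fA: "finite ?A" "finite ?B" using assms by auto
  have 1: "card ?A = card (?A - ?B) + card (?A \<inter> ?B)"
  proof -
    have e: "?A = (?A - ?B) \<union> (?A \<inter> ?B)" by auto
    have "card ((?A - ?B) \<union> (?A \<inter> ?B)) = card (?A - ?B) + card (?A \<inter> ?B)"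
      by (rule card_Un_disjoint) (use fA in auto)
    then show ?thesis using e by simp
  qed
  have 2: "card ?B = card (?B - ?A) + card (?A \<inter> ?B)"
  proof -
    have e: "?B = (?B - ?A) \<union> (?A \<inter> ?B)" by auto
    have "card ((?B - ?A) \<union> (?A \<inter> ?B)) = card (?B - ?A) + card (?A \<inter> ?B)"
      by (rule card_Un_disjoint) (use fA in auto)
    then show ?thesis using e by simp
  qed
  have 3: "{e\<in>C. P e \<noteq> Q e} = (?A - ?B) \<union> (?B - ?A)" by auto
  have 4: "card {e\<in>C. P e \<noteq> Q e} = card (?A - ?B) + card (?B - ?A)"
    unfolding 3 by (rule card_Un_disjoint) (use fA in auto)
  show ?thesis by (rule par_arith[OF 1 2 4])
qed

context tree begin

definition lab :: "'v set set \<Rightarrow> 'v \<Rightarrow> nat" where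
  "lab C x = card {e\<in>C. side e x} mod 2"

lemma lab_lt: "lab C x < 2" unfolding lab_def by simp

lemma lab_diff: "finite C \<Longrightarrow> lab C x \<noteq> lab C y \<longleftrightarrow> odd (card {e\<in>C. side e x \<noteq> side e y})"
  unfolding lab_def by (rule parity_sum)

lemma lab_changes:
  assumes "C \<subseteq> E"
  shows "changes E (lab C) \<le> card C"
proof -
  have finC: "finite C" using assms finE finite_subset by blast
  have "{e\<in>E. \<exists>u v. e = {u,v} \<and> lab C u \<noteq> lab C v} \<subseteq> C"
  proof
    fix e assume "e \<in> {e\<in>E. \<exists>u v. e = {u,v} \<and> lab C u \<noteq> lab C v}"
    then obtain u v where e: "e \<in> E" "e = {u,v}" "lab C u \<noteq> lab C v" by blast
    show "e \<in> C"
    proof (rule ccontr)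
      assume "e \<notin> C"
      have "side e' u = side e' v" if "e' \<in> C" for e'
      proof -
        have "e' \<noteq> {u,v}" using that \<open>e \<notin> C\<close> e(2) by blast
        then show ?thesis using step[of u v e'] e(1,2) by simp
      qed
      then have "{e'\<in>C. side e' u \<noteq> side e' v} = {}" by auto
      then have z: "card {e'\<in>C. side e' u \<noteq> side e' v} = 0" by (metis card.empty)
      from lab_diff[OF finC, of u v] e(3) have "odd (card {e'\<in>C. side e' u \<noteq> side e' v})" by blast
      with z show False by simp
    qed
  qed
  then show ?thesis unfolding changes_def using finC by (simp add: card_mono)
qed

lemma lower:
  assumes finK: "finite K" and uv: "\<And>k. k \<in> K \<Longrightarrow> u k \<in> V \<and> v k \<in> V"
    and disj: "\<And>k k'. k \<in> K \<Longrightarrow> k' \<in> K \<Longrightarrow> k \<noteq> k' \<Longrightarrow>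
        path_edges (tpath E (u k) (v k)) \<inter> path_edges (tpath E (u k') (v k')) = {}"
  shows "card {k\<in>K. g (u k) \<noteq> g (v k)} \<le> changes E g"
proof -
  define Ch where "Ch = {e\<in>E. \<exists>x y. e = {x,y} \<and> g x \<noteq> g y}"
  define B where "B = {k\<in>K. g (u k) \<noteq> g (v k)}"
  define L where "L k = path_edges (tpath E (u k) (v k)) \<inter> Ch" for k
  have finB: "finite B" using finK unfolding B_def by simp
  have ne: "L k \<noteq> {}" if k: "k \<in> B" for k
  proof -
    let ?p = "tpath E (u k) (v k)"
    have kK: "k \<in> K" and gd: "g (u k) \<noteq> g (v k)" using k unfolding B_def by auto
    have p: "is_path E ?p" "hd ?p = u k" "last ?p = v k" using tp uv[OF kK] by auto
    obtain i where i: "Suc i < length ?p" "g (?p ! i) = g (u k)" "g (?p ! Suc i) \<noteq> g (u k)"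
      using list_cross[of ?p "\<lambda>x. g x = g (u k)"] p gd path_ne by auto
    have ed: "{?p ! i, ?p ! Suc i} \<in> path_edges ?p" by (rule cross_edge[OF i(1)])
    then have "{?p ! i, ?p ! Suc i} \<in> E" using path_edges_subset p(1) by blast
    moreover have "g (?p ! i) \<noteq> g (?p ! Suc i)" using i by simp
    ultimately have "{?p ! i, ?p ! Suc i} \<in> Ch" unfolding Ch_def by blast
    then show ?thesis unfolding L_def using ed by blast
  qed
  have finL: "finite (L k)" for k unfolding L_def Ch_def using finE by simp
  have "card B = (\<Sum>k\<in>B. 1)" by simp
  also have "\<dots> \<le> (\<Sum>k\<in>B. card (L k))"
    by (rule sum_mono) (use ne finL in \<open>simp add: Suc_le_eq card_gt_0_iff\<close>)
  also have "\<dots> = card (\<Union>k\<in>B. L k)"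
  proof (rule card_UN_disjoint[symmetric, OF finB])
    show "\<forall>k\<in>B. finite (L k)" using finL by simp
    show "\<forall>k\<in>B. \<forall>k'\<in>B. k \<noteq> k' \<longrightarrow> L k \<inter> L k' = {}"
      using disj unfolding L_def B_def by blast
  qed
  also have "\<dots> \<le> card Ch"
  proof (rule card_mono)
    show "finite Ch" unfolding Ch_def using finE by simp
    show "(\<Union>k\<in>B. L k) \<subseteq> Ch" unfolding L_def by blast
  qed
  finally show ?thesis unfolding B_def Ch_def changes_def .
qed

lemma pscore_le:
  assumes "0 \<in> S" "\<forall>x\<in>X. f x \<in> S"
  shows "pscore V E X S f \<le> card E"
proof -
  define g where "g v = (if v \<in> X then f v else 0)" for v
  have "pscore V E X S f \<le> changes E g"
    unfolding pscore_def by (rule Least_le, rule exI[of _ g]) (use assms in \<open>auto simp: g_def\<close>)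
  also have "\<dots> \<le> card E" unfolding changes_def using finE by (simp add: card_mono)
  finally show ?thesis .
qed

end

lemma averaging:
  fixes K :: "'k set" and Ep :: "'e set" and sep :: "'k \<Rightarrow> 'e \<Rightarrow> bool" and m :: nat
  assumes finK: "finite K" and finE: "finite Ep" and cK: "card K = 2 * m" and cE: "card Ep \<le> m"
    and ex: "\<forall>k\<in>K. \<exists>x\<in>Ep. sep k x"
  shows "\<exists>C\<subseteq>Ep. int m \<le> 2 * (int (card {k\<in>K. odd (card {x\<in>C. sep k x})}) - int (card C))"
proof (rule ccontr)
  assume H: "\<not> ?thesis"
  let ?n = "card Ep" and ?P = "Pow Ep"
  define bich where "bich C = card {k\<in>K. odd (card {x\<in>C. sep k x})}" for C
  have finP: "finite ?P" using finE by simp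
  have H': "\<not> int m \<le> 2 * (int (card {k\<in>K. odd (card {x\<in>C. sep k x})}) - int (card C))" if "C \<subseteq> Ep" for C
    using H that by blast
  have lt: "2 * (int (bich C) - int (card C)) \<le> int m - 1" if "C \<in> ?P" for C
  proof -
    have "\<not> int m \<le> 2 * (int (bich C) - int (card C))" using H'[of C] that unfolding bich_def by simp
    then show ?thesis by linarith
  qed
  have "(\<Sum>C\<in>?P. bich C) = (\<Sum>k\<in>K. card {C\<in>?P. odd (card {x\<in>C. sep k x})})"
    unfolding bich_def by (rule card_filter_swap[OF finP finK])
  then have "2 * (\<Sum>C\<in>?P. bich C) = (\<Sum>k\<in>K. 2 * card {C\<in>?P. odd (card {x\<in>C. sep k x})})"
    by (simp add: sum_distrib_left)
  also have "\<dots> = (\<Sum>k\<in>K. 2 ^ ?n)"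
  proof (rule sum.cong[OF refl])
    fix k assume k: "k \<in> K"
    then obtain x where x: "x \<in> Ep" "sep k x" using ex by blast
    have "{C\<in>?P. odd (card {x\<in>C. sep k x})} = {C\<in>?P. odd (card (C \<inter> {x. sep k x}))}"
      by (simp add: Int_def)
    then show "2 * card {C\<in>?P. odd (card {x\<in>C. sep k x})} = 2 ^ ?n"
      using pow_parity[OF finE x(1), of "{x. sep k x}"] x(2) by simp
  qed
  finally have s1: "2 * (\<Sum>C\<in>?P. bich C) = 2 * m * 2 ^ ?n" using cK by simp
  have s2: "2 * (\<Sum>C\<in>?P. card C) = ?n * 2 ^ ?n" by (rule pow_card_sum[OF finE])
  have "(\<Sum>C\<in>?P. 2 * (int (bich C) - int (card C))) \<le> (\<Sum>C\<in>?P. int m - 1)"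
    by (rule sum_mono) (rule lt)
  also have "\<dots> = 2 ^ ?n * (int m - 1)" using finE by (simp add: card_Pow)
  finally have ineq: "(\<Sum>C\<in>?P. 2 * (int (bich C) - int (card C))) \<le> 2 ^ ?n * (int m - 1)" .
  have "(\<Sum>C\<in>?P. 2 * (int (bich C) - int (card C))) = int (2 * (\<Sum>C\<in>?P. bich C)) - int (2 * (\<Sum>C\<in>?P. card C))"
    by (simp add: sum_subtractf sum_distrib_left right_diff_distrib)
  also have "\<dots> = (2 * int m - int ?n) * 2 ^ ?n" using s1 s2 by (simp add: algebra_simps)
  finally have "(2 * int m - int ?n) * 2 ^ ?n \<le> (int m - 1) * 2 ^ ?n" using ineq by (simp add: mult.commute)
  then have "2 * int m - int ?n \<le> int m - 1"
    using mult_le_cancel_right_pos[of "2 ^ ?n :: int"] by simp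
  then show False using cE by linarith
qed

lemma states_01: "t \<ge> (2::enat) \<Longrightarrow> n < 2 \<Longrightarrow> n \<in> states t"
  unfolding states_def
proof -
  assume t: "t \<ge> 2" and n: "n < 2"
  have "enat n < 2" using n by (simp add: numeral_eq_enat)
  then show "n \<in> {n. enat n < t}" using t by simp
qed

lemma arith4: "(b::int) \<le> p1 \<Longrightarrow> p2 \<le> c \<Longrightarrow> q \<le> 2 * (b - c) \<Longrightarrow> q \<le> 2 * (p1 - p2)"
  by (simp add: algebra_simps)

lemma arith7: "\<bar>a::int\<bar> \<le> d \<Longrightarrow> q \<le> 2 * a \<Longrightarrow> real_of_int q / 27 \<le> real_of_int d"
proof -
  assume h: "\<bar>a\<bar> \<le> d" "q \<le> 2 * a"
  have "a \<le> d" using h(1) abs_ge_self order_trans by blast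
  then have "q \<le> 2 * d" using h(2) by (simp add: algebra_simps)
  moreover have "0 \<le> d" using h(1) abs_ge_zero order_trans by blast
  ultimately have "q \<le> 27 * d" by (simp add: algebra_simps)
  then have "real_of_int q \<le> real_of_int (27 * d)" by (simp only: of_int_le_iff)
  then show ?thesis by simp
qed

theorem mainTheorem11:
  fixes V1 V2 X :: "'v set" and E1 E2 :: "'v set set" and Q :: "'v set set" and t :: enat
  assumes "is_tree_on V1 E1 X" and "is_tree_on V2 E2 X"
    and "\<forall>q\<in>Q. q \<subseteq> X \<and> card q = 4"
    and "\<forall>q\<in>Q. incompatible E1 E2 q"
    and "\<forall>q\<in>Q. \<forall>q'\<in>Q. q \<noteq> q' \<longrightarrow> leg_disjoint E1 q q'"
    and "t \<ge> 2"
  shows "real_of_int (dMP t V1 E1 V2 E2 X) \<ge> real (card Q) / 27"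
proof -
  have TT: "two_trees V1 E1 V2 E2 X" unfolding two_trees_def tree_def using assms(1,2) by simp
  interpret two_trees V1 E1 V2 E2 X by (rule TT)
  have finX: "finite X" using T1.X_V T1.finV finite_subset by blast
  have finQ: "finite Q" using assms(3) finX by (meson Pow_iff finite_Pow_iff finite_subset subsetI)
  define Wit where "Wit q w \<longleftrightarrow> (case w of (a,b,c,d,e) \<Rightarrow> q = {a,b,c,d} \<and> {{a,b},{c,d}} \<in> quartet_top E1 q \<and> T1.D a b c d \<and>
     e \<in> E2 \<and> T2.side e a \<noteq> T2.side e b \<and> T2.side e c \<noteq> T2.side e d)" for q w
  have "\<forall>q\<in>Q. \<exists>w. Wit q w"
  proof
    fix q assume q: "q \<in> Q"
    then have "quartet_top E1 q \<noteq> quartet_top E2 q" using assms(4) unfolding incompatible_def by blast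
    then obtain a b c d e where w: "q = {a,b,c,d} \<and> {{a,b},{c,d}} \<in> quartet_top E1 q \<and> T1.D a b c d \<and>
     e \<in> E2 \<and> T2.side e a \<noteq> T2.side e b \<and> T2.side e c \<noteq> T2.side e d"
      using quartet_witness[of q] assms(3) q by blast
    show "\<exists>w. Wit q w" unfolding Wit_def
      apply (rule exI[of _ "(a,b,c,d,e)"])
      apply (simp only: prod.case)
      by (rule w)
  qed
  from bchoice[OF this] obtain W where W: "\<forall>q\<in>Q. Wit q (W q)" by blast
  define a where "a q = fst (W q)" for q
  define b where "b q = fst (snd (W q))" for q
  define c where "c q = fst (snd (snd (W q)))" for q
  define d where "d q = fst (snd (snd (snd (W q))))" for q
  define e where "e q = snd (snd (snd (snd (W q))))" for q
  have Wq: "q = {a q, b q, c q, d q} \<and> {{a q, b q},{c q, d q}} \<in> quartet_top E1 q \<and> T1.D (a q) (b q) (c q) (d q) \<and>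
     e q \<in> E2 \<and> T2.side (e q) (a q) \<noteq> T2.side (e q) (b q) \<and> T2.side (e q) (c q) \<noteq> T2.side (e q) (d q)"
    if "q \<in> Q" for q
  proof -
    have "W q = (a q, b q, c q, d q, e q)" unfolding a_def b_def c_def d_def e_def by simp
    then have "Wit q (a q, b q, c q, d q, e q)" using W that by metis
    then show ?thesis unfolding Wit_def prod.case .
  qed
  define K where "K = Q \<times> (UNIV :: bool set)"
  define u where "u k = (if snd k then c (fst k) else a (fst k))" for k
  define v where "v k = (if snd k then d (fst k) else b (fst k))" for k
  have finK: "finite K" unfolding K_def using finQ by simp
  have cK: "card K = 2 * card Q" unfolding K_def by (simp add: card_cartesian_product)
  have uvX: "u k \<in> X \<and> v k \<in> X" if "k \<in> K" for k
  proof -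
    have q: "fst k \<in> Q" using that unfolding K_def by auto
    then have "{a (fst k), b (fst k), c (fst k), d (fst k)} \<subseteq> X" using Wq[OF q] assms(3) by metis
    then show ?thesis unfolding u_def v_def by auto
  qed
  have leg_sub: "path_edges (tpath E1 (u k) (v k)) \<subseteq> leg_edges E1 (fst k)" if "k \<in> K" for k
  proof -
    have q: "fst k \<in> Q" using that unfolding K_def by auto
    let ?q = "fst k"
    have m: "{{a ?q, b ?q},{c ?q, d ?q}} \<in> quartet_top E1 ?q" using Wq[OF q] by blast
    have "path_edges (tpath E1 (a ?q) (b ?q)) \<union> path_edges (tpath E1 (c ?q) (d ?q)) \<subseteq> leg_edges E1 ?q"
      unfolding leg_edges_def using m by blast
    then show ?thesis unfolding u_def v_def by (auto split: if_splits)
  qed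
  have disj: "path_edges (tpath E1 (u k) (v k)) \<inter> path_edges (tpath E1 (u k') (v k')) = {}"
    if k: "k \<in> K" "k' \<in> K" "k \<noteq> k'" for k k'
  proof (cases "fst k = fst k'")
    case False
    have qq: "fst k \<in> Q" "fst k' \<in> Q" using k unfolding K_def by auto
    have "leg_disjoint E1 (fst k) (fst k')" using assms(5) qq False by blast
    then show ?thesis using leg_sub[OF k(1)] leg_sub[OF k(2)] unfolding leg_disjoint_def by blast
  next
    case True
    let ?q = "fst k"
    have q: "?q \<in> Q" using k unfolding K_def by auto
    have D: "set (tpath E1 (a ?q) (b ?q)) \<inter> set (tpath E1 (c ?q) (d ?q)) = {}"
      using Wq[OF q] unfolding T1.D_def by blast
    have "snd k \<noteq> snd k'" using True k(3) by (simp add: prod_eq_iff)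
    have fk': "fst k' = ?q" using True by simp
    have Ds: "set (tpath E1 (u k) (v k)) \<inter> set (tpath E1 (u k') (v k')) = {}"
    proof (cases "snd k")
      case True
      then have "\<not> snd k'" using \<open>snd k \<noteq> snd k'\<close> by simp
      then have "u k = c ?q" "v k = d ?q" "u k' = a ?q" "v k' = b ?q" using True fk' unfolding u_def v_def by simp_all
      then show ?thesis using D by (simp add: Int_commute)
    next
      case False
      then have "snd k'" using \<open>snd k \<noteq> snd k'\<close> by simp
      then have "u k = a ?q" "v k = b ?q" "u k' = c ?q" "v k' = d ?q" using False fk' unfolding u_def v_def by simp_all
      then show ?thesis using D by simp
    qed
    show ?thesis
    proof (rule ccontr)
      assume "path_edges (tpath E1 (u k) (v k)) \<inter> path_edges (tpath E1 (u k') (v k')) \<noteq> {}"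
      then obtain f where f: "f \<in> path_edges (tpath E1 (u k) (v k))" "f \<in> path_edges (tpath E1 (u k') (v k'))" by blast
      have "f \<in> E1" using f(1) path_edges_subset T1.tp uvX[OF k(1)] T1.X_V by blast
      then obtain x y where "f = {x,y}" using T1.edge_form by blast
      then show False using f path_edges_in_set Ds by blast
    qed
  qed
  define Ep where "Ep = e ` Q"
  have finEp: "finite Ep" unfolding Ep_def using finQ by simp
  have EpE2: "Ep \<subseteq> E2" unfolding Ep_def using Wq by blast
  have cEp: "card Ep \<le> card Q" unfolding Ep_def using finQ by (rule card_image_le)
  define sep where "sep k x \<longleftrightarrow> T2.side x (u k) \<noteq> T2.side x (v k)" for k x
  have ex: "\<forall>k\<in>K. \<exists>x\<in>Ep. sep k x"
  proof
    fix k assume k: "k \<in> K"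
    have q: "fst k \<in> Q" using k unfolding K_def by auto
    show "\<exists>x\<in>Ep. sep k x"
      by (rule bexI[of _ "e (fst k)"]) (use Wq[OF q] q in \<open>auto simp: sep_def u_def v_def Ep_def\<close>)
  qed
  obtain C where C: "C \<subseteq> Ep" "int (card Q) \<le> 2 * (int (card {k\<in>K. odd (card {x\<in>C. sep k x})}) - int (card C))"
    using averaging[OF finK finEp cK cEp ex] by blast
  have CE2: "C \<subseteq> E2" using C(1) EpE2 by blast
  have finC: "finite C" using C(1) finEp finite_subset by blast
  define f where "f = T2.lab C"
  have fst: "f x \<in> states t" for x unfolding f_def using states_01[OF assms(6) T2.lab_lt] .
  define p1 where "p1 = pscore V1 E1 X (states t) f"
  define p2 where "p2 = pscore V2 E2 X (states t) f"
  have p2: "p2 \<le> card C"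
  proof -
    have "p2 \<le> changes E2 f"
      unfolding p2_def pscore_def by (rule Least_le, rule exI[of _ f]) (use fst in auto)
    also have "\<dots> \<le> card C" unfolding f_def by (rule T2.lab_changes[OF CE2])
    finally show ?thesis .
  qed
  have p1: "card {k\<in>K. odd (card {x\<in>C. sep k x})} \<le> p1"
  proof -
    have ex1: "\<exists>k. \<exists>g. (\<forall>x\<in>X. g x = f x) \<and> (\<forall>v\<in>V1. g v \<in> states t) \<and> changes E1 g = k"
      using fst by blast
    have "\<exists>g. (\<forall>x\<in>X. g x = f x) \<and> (\<forall>v\<in>V1. g v \<in> states t) \<and> changes E1 g = p1"
      unfolding p1_def pscore_def by (rule LeastI_ex[OF ex1])
    then obtain g where g: "\<forall>x\<in>X. g x = f x" "changes E1 g = p1" by blast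
    have "{k\<in>K. odd (card {x\<in>C. sep k x})} = {k\<in>K. g (u k) \<noteq> g (v k)}"
    proof (rule Collect_cong)
      fix k
      show "(k \<in> K \<and> odd (card {x\<in>C. sep k x})) \<longleftrightarrow> (k \<in> K \<and> g (u k) \<noteq> g (v k))"
      proof (cases "k \<in> K")
        case True
        then have "g (u k) = f (u k)" "g (v k) = f (v k)" using g(1) uvX by auto
        moreover have "f (u k) \<noteq> f (v k) \<longleftrightarrow> odd (card {x\<in>C. sep k x})"
          unfolding f_def sep_def by (rule T2.lab_diff[OF finC])
        ultimately show ?thesis using True by simp
      qed simp
    qed
    also have "card \<dots> \<le> changes E1 g"
      by (rule T1.lower[OF finK]) (use uvX T1.X_V disj in auto)
    finally show ?thesis using g(2) by simp
  qed
  define S where "S = {\<bar>int (pscore V1 E1 X (states t) f) - int (pscore V2 E2 X (states t) f)\<bar> | f.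
      \<forall>x\<in>X. f x \<in> states t}"
  have S_sub: "S \<subseteq> {0 .. int (card E1 + card E2)}"
  proof
    fix z assume "z \<in> S"
    then obtain h where h: "z = \<bar>int (pscore V1 E1 X (states t) h) - int (pscore V2 E2 X (states t) h)\<bar>"
      "\<forall>x\<in>X. h x \<in> states t" unfolding S_def by blast
    have 0: "0 \<in> states t" using states_01[OF assms(6)] by simp
    have "pscore V1 E1 X (states t) h \<le> card E1" by (rule T1.pscore_le[OF 0 h(2)])
    moreover have "pscore V2 E2 X (states t) h \<le> card E2" by (rule T2.pscore_le[OF 0 h(2)])
    ultimately show "z \<in> {0 .. int (card E1 + card E2)}" using h(1) by auto
  qed
  have finS: "finite S" using S_sub finite_subset by blast
  have inS: "\<bar>int p1 - int p2\<bar> \<in> S" unfolding S_def p1_def p2_def using fst by blast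
  have "\<bar>int p1 - int p2\<bar> \<le> dMP t V1 E1 V2 E2 X"
    unfolding dMP_def using Max_ge[OF finS inS] unfolding S_def by simp
  moreover have "int (card Q) \<le> 2 * (int p1 - int p2)"
  proof -
    have "int (card {k\<in>K. odd (card {x\<in>C. sep k x})}) \<le> int p1" using p1 by simp
    moreover have "int p2 \<le> int (card C)" using p2 by simp
    ultimately show ?thesis using C(2) arith4 by blast
  qed
  ultimately show ?thesis using arith7 by (metis of_int_of_nat_eq)
qed

end
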